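(* Let $F\in Sh^{s,0}_{\Lambda_L}(X)\cap Mod(X)$, given by data $(V,\rho,W_s,\rho_s,T_s)$, and let $f$ be any local trivialization. Let $c_s$ be a pure framed cord starting and ending on (the framing curve of) $K_s$, regarded (after homotopy) as a loop in $X\setminus L$. Then $\epsilon_F(\lambda_s)=\mathrm{tr}(\rho(\ell_s))-\mathrm{tr}(\rho_s(K_s))$, $\epsilon_F(\mu_s)=1-\mathrm{tr}(\mathrm{id}_V-\rho(m_s))$, $\epsilon_F(c_s)=\mathrm{tr}(\rho(c_s)-\rho(m_s\cdot c_s))$, where $\epsilon_F=\epsilon_{(F,f)}$. In particular these values do not depend on the choice of the local trivialization.
   Context: $X=\mathbb{R}^3$ or $S^3$, $k$ a field, $(L,L')$ an $r$-component framed oriented link, $L=K_1\sqcup\dots\sqcup K_r$. Sheaves in $Sh^{s,0}_{\Lambda_L}(X)\cap Mod(X)$ (sheaves of $k$-vector spaces with micro-support at infinity in the unit conormal of $L$, microlocally simple with Morse cone in degree $0$) are equivalent to data $(V,\rho,W_s,\rho_s,T_s)$: $\rho:\pi_1(X\setminus L)\to GL(V)$ the local system on the complement ($V$ finite-dimensional), $\rho_s:\pi_1(K_s)\to GL(W_s)$ the local system on $K_s$, $T_s:W_s\to V$ the injective restriction map with one-dimensional cokernel, the meridian $m_s$ acting trivially on its image and $\rho(\ell_s)T_s=T_s\rho_s(K_s)$ for the longitude $\ell_s$; we view $W_s\subset V$. $A_c$ denotes trivialized parallel transport along a path $c$, $M_t=\rho(m_t)$. A local trivialization is an $r$-tuple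 of surjective linear maps $f_s:V\to k$ with $f_s|_{W_s}=0$. $\epsilon_{(F,f)}$ is the augmentation of the framed cord algebra $\mathrm{Cord}(L)$ given on generators by $\epsilon(c_{st})=f_sA_{c_{st}}(\mathrm{id}_V-M_t)f_t^{-1}$ for framed cords $c_{st}$ from the framing curve of $K_s$ to that of $K_t$, $\epsilon(\lambda_s)=f_sA_{\ell_s}f_s^{-1}$, $\epsilon(\mu_s)=1-f_s(\mathrm{id}_V-M_s)f_s^{-1}$, with $f_s^{-1}$ any right inverse of $f_s$. *)

theory Defs
  imports "Jordan_Normal_Form.Matrix"
begin

definition mat_trace :: "'a::comm_ring_1 mat \<Rightarrow> 'a" where
  "mat_trace A = (\<Sum>i<dim_row A. A $$ (i, i))"

definition scal :: "'a mat \<Rightarrow> 'a" where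
  "scal A = A $$ (0, 0)"

end

theory Submission
  imports Defs "Jordan_Normal_Form.Determinant"
begin


lemma mat_trace_comm:
  fixes A B :: "'a::comm_ring_1 mat"
  assumes "A \<in> carrier_mat a b" "B \<in> carrier_mat b a"
  shows "mat_trace (A*B) = mat_trace (B*A)"
proof -
  have "mat_trace (A*B) = (\<Sum>i<a. \<Sum>j<b. A$$(i,j) * B$$(j,i))"
    using assms by (simp add: mat_trace_def scalar_prod_def atLeast0LessThan)
  also have "\<dots> = (\<Sum>j<b. \<Sum>i<a. B$$(j,i) * A$$(i,j))"
    by (subst sum.swap) (simp add: mult.commute)
  also have "\<dots> = mat_trace (B*A)"
    using assms by (simp add: mat_trace_def scalar_prod_def atLeast0LessThan)
  finally show ?thesis .
qed

lemma mat_trace_add: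
  fixes A B :: "'a::comm_ring_1 mat"
  assumes "A \<in> carrier_mat a a" "B \<in> carrier_mat a a"
  shows "mat_trace (A+B) = mat_trace A + mat_trace B"
  using assms by (simp add: mat_trace_def sum.distrib)

lemma mat_trace_minus:
  fixes A B :: "'a::comm_ring_1 mat"
  assumes "A \<in> carrier_mat a a" "B \<in> carrier_mat a a"
  shows "mat_trace (A-B) = mat_trace A - mat_trace B"
  using assms by (simp add: mat_trace_def sum_subtractf)

lemma mat_trace_one: "mat_trace (A :: 'a::comm_ring_1 mat) = scal A" if "A \<in> carrier_mat 1 1"
  using that by (simp add: mat_trace_def scal_def)

lemma mat_trace_id: "mat_trace (1\<^sub>m n :: 'a::comm_ring_1 mat) = of_nat n"
  by (simp add: mat_trace_def)



lemma decomp: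
  fixes T f g :: "'k::field mat"
  assumes nm: "n = Suc m"
    and T: "T \<in> carrier_mat n m"
    and T_inj: "\<forall>v \<in> carrier_vec m. T *\<^sub>v v = 0\<^sub>v n \<longrightarrow> v = 0\<^sub>v m"
    and f: "f \<in> carrier_mat 1 n"
    and fW: "f * T = 0\<^sub>m 1 m"
    and g: "g \<in> carrier_mat n 1"
    and fg: "f * g = 1\<^sub>m 1"
  shows "\<exists>S \<in> carrier_mat m n. T * S + g * f = 1\<^sub>m n \<and> S * T = 1\<^sub>m m"
proof -
  define P where "P = mat n n (\<lambda>(i,j). if j < m then T$$(i,j) else g$$(i,0))"
  have Pc: "P \<in> carrier_mat n n" unfolding P_def by simp
  have dP[simp]: "dim_row P = n" "dim_col P = n" unfolding P_def by simp_all
  have dT[simp]: "dim_row T = n" "dim_col T = m" using T by auto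
  have df[simp]: "dim_row f = 1" "dim_col f = n" using f by auto
  have dg[simp]: "dim_row g = n" "dim_col g = 1" using g by auto
  have inj: "v = 0\<^sub>v n" if v: "v \<in> carrier_vec n" and Pv: "P *\<^sub>v v = 0\<^sub>v n" for v
  proof -
    define y where "y = vec m (\<lambda>j. v$j)"
    define c where "c = v$m"
    have yc: "y \<in> carrier_vec m" unfolding y_def by simp
    have hP: "P *\<^sub>v v = T *\<^sub>v y + c \<cdot>\<^sub>v col g 0"
    proof (rule eq_vecI)
      fix i assume i: "i < dim_vec (T *\<^sub>v y + c \<cdot>\<^sub>v col g 0)"
      hence i': "i < n" using T g by simp
      have "(P *\<^sub>v v) $ i = (\<Sum>j<Suc m. P$$(i,j) * v$j)"
        using i' v nm by (simp add: Pc scalar_prod_def atLeast0LessThan)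
      also have "\<dots> = (\<Sum>j<m. T$$(i,j) * y$j) + g$$(i,0) * c"
        using i' nm by (simp add: P_def y_def c_def)
      also have "\<dots> = (T *\<^sub>v y + c \<cdot>\<^sub>v col g 0) $ i"
        using i' T g yc by (simp add: scalar_prod_def atLeast0LessThan mult.commute)
      finally show "(P *\<^sub>v v) $ i = (T *\<^sub>v y + c \<cdot>\<^sub>v col g 0) $ i" .
    qed (use T g in simp)
    have "f *\<^sub>v (P *\<^sub>v v) = (f * T) *\<^sub>v y + c \<cdot>\<^sub>v (f *\<^sub>v col g 0)"
    proof -
      have c1: "T *\<^sub>v y \<in> carrier_vec n" using T yc by simp
      have c2: "col g 0 \<in> carrier_vec n" by (rule carrier_vecI) simp
      have c3: "c \<cdot>\<^sub>v col g 0 \<in> carrier_vec n" using c2 by simp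
      show ?thesis unfolding hP
        using mult_add_distrib_mat_vec[OF f c1 c3] mult_mat_vec[OF f c2] assoc_mult_mat_vec[OF f T yc]
        by simp
    qed
    hence "(f *\<^sub>v (P *\<^sub>v v)) $ 0 = ((f * T) *\<^sub>v y) $ 0 + c * (f *\<^sub>v col g 0) $ 0"
      by simp
    also have "((f * T) *\<^sub>v y) $ 0 = 0" unfolding fW using yc
      by (simp add: scalar_prod_def)
    also have "f *\<^sub>v col g 0 = col (f * g) 0" using col_mult2[OF f g, of 0] by simp
    also have "col (f * g) 0 $ 0 = 1" unfolding fg by simp
    finally have "(f *\<^sub>v (P *\<^sub>v v)) $ 0 = c" by simp
    hence c0: "c = 0" using Pv f by (simp add: scalar_prod_def)
    have "T *\<^sub>v y = T *\<^sub>v y + c \<cdot>\<^sub>v col g 0" using c0 T g by (intro eq_vecI) auto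
    hence "T *\<^sub>v y = 0\<^sub>v n" using hP Pv by simp
    hence y0: "y = 0\<^sub>v m" using T_inj yc by blast
    show ?thesis
    proof (rule eq_vecI)
      fix j assume "j < dim_vec (0\<^sub>v n :: 'k vec)"
      hence "j < m \<or> j = m" using nm by auto
      thus "v $ j = 0\<^sub>v n $ j"
      proof
        assume "j < m" thus ?thesis using y0 nm unfolding y_def
          by (metis dim_vec index_vec index_zero_vec(1) less_SucI)
      qed (use c0 c_def nm in simp)
    qed (use v in simp)
  qed
  have "det P \<noteq> 0"
    using det_0_iff_vec_prod_zero_field[OF Pc] inj by blast
  from det_non_zero_imp_unit[OF Pc this, of "()"]
  obtain Q where Q: "Q \<in> carrier_mat n n" "Q * P = 1\<^sub>m n" "P * Q = 1\<^sub>m n"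
    unfolding Units_def ring_mat_def by auto
  have dQ[simp]: "dim_row Q = n" "dim_col Q = n" using Q by auto
  define S where "S = mat m n (\<lambda>(i,j). Q$$(i,j))"
  define q where "q = mat 1 n (\<lambda>(i,j). Q$$(m,j))"
  define e where "e = mat 1 n (\<lambda>(i,j). if j = m then (1::'k) else 0)"
  have Sc: "S \<in> carrier_mat m n" unfolding S_def by simp
  have dS[simp]: "dim_row S = m" "dim_col S = n" "dim_row q = 1" "dim_col q = n"
    "dim_row e = 1" "dim_col e = n" unfolding S_def q_def e_def by simp_all
  have TSq: "T * S + g * q = P * Q"
  proof (rule eq_matI)
    fix i j assume ij: "i < dim_row (P * Q)" "j < dim_col (P * Q)"
    hence i: "i < n" and j: "j < n" using Pc Q by auto
    have "(P * Q) $$ (i,j) = (\<Sum>k<Suc m. P$$(i,k) * Q$$(k,j))"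
      using i j nm by (simp add: scalar_prod_def atLeast0LessThan)
    also have "\<dots> = (\<Sum>k<m. T$$(i,k) * S$$(k,j)) + g$$(i,0) * q$$(0,j)"
      using i j nm by (simp add: P_def S_def q_def)
    also have "\<dots> = (T * S + g * q) $$ (i,j)"
      using i j nm by (simp add: scalar_prod_def atLeast0LessThan q_def)
    finally show "(T * S + g * q) $$ (i,j) = (P * Q) $$ (i,j)" by simp
  qed (use T Sc Pc Q in auto)
  have ST: "S * T = 1\<^sub>m m"
  proof (rule eq_matI)
    fix i j assume ij: "i < dim_row (1\<^sub>m m :: 'k mat)" "j < dim_col (1\<^sub>m m :: 'k mat)"
    hence i: "i < m" and j: "j < m" by auto
    have "(S * T) $$ (i,j) = (Q * P) $$ (i,j)"
      using i j nm by (simp add: scalar_prod_def atLeast0LessThan S_def P_def)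
    also have "\<dots> = 1\<^sub>m m $$ (i,j)" using Q i j nm by simp
    finally show "(S * T) $$ (i,j) = 1\<^sub>m m $$ (i,j)" .
  qed (use T Sc in auto)
  have fP: "f * P = e"
  proof (rule eq_matI)
    fix i j assume ij: "i < dim_row e" "j < dim_col e"
    hence i: "i = 0" and j: "j < n" unfolding e_def by auto
    show "(f * P) $$ (i,j) = e $$ (i,j)"
    proof (cases "j < m")
      case True
      have "(f * P) $$ (i,j) = (f * T) $$ (0,j)"
        using i j True f T Pc by (simp add: scalar_prod_def P_def)
      thus ?thesis using True fW nm i unfolding e_def by simp
    next
      case False
      hence jm: "j = m" using j nm by simp
      have "(f * P) $$ (i,j) = (f * g) $$ (0,0)"
        using i j jm f g Pc nm by (simp add: scalar_prod_def P_def)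
      thus ?thesis using fg jm nm i unfolding e_def by simp
    qed
  qed (use f Pc e_def in auto)
  have eQ: "e * Q = q"
  proof (rule eq_matI)
    fix i j assume ij: "i < dim_row q" "j < dim_col q"
    hence i: "i = 0" and j: "j < n" unfolding q_def by auto
    have "(e * Q) $$ (i,j) = (\<Sum>k<Suc m. e$$(0,k) * Q$$(k,j))"
      using i j Q nm by (simp add: scalar_prod_def atLeast0LessThan e_def)
    also have "\<dots> = q $$ (i,j)" using i j nm by (simp add: e_def q_def)
    finally show "(e * Q) $$ (i,j) = q $$ (i,j)" .
  qed (use Q q_def e_def in auto)
  have "f = f * (P * Q)" using Q f by simp
  also have "\<dots> = (f * P) * Q" using f Pc Q by (simp add: assoc_mult_mat)
  finally have "f = q" using fP eQ by simp
  thus ?thesis using TSq ST Sc Q by auto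
qed



theorem proposition4p8:
  fixes n :: nat
    and M Lg A :: "'k::field mat"   \<comment> \<open>M = rho(m_s), Lg = rho(l_s), A = rho(c_s)\<close>
    and T :: "'k mat"               \<comment> \<open>T_s : W_s \<rightarrow> V, with W_s = k^(n-1), V = k^n\<close>
    and R :: "'k mat"               \<comment> \<open>R = rho_s(K_s)\<close>
    and f :: "'k mat"               \<comment> \<open>local trivialization f_s : V \<rightarrow> k (1 x n)\<close>
    and g :: "'k mat"               \<comment> \<open>right inverse f_s^{-1} : k \<rightarrow> V (n x 1)\<close>
  assumes n: "n \<ge> 1"
    and M: "M \<in> carrier_mat n n" "invertible_mat M"
    and Lg: "Lg \<in> carrier_mat n n" "invertible_mat Lg"
    and A: "A \<in> carrier_mat n n" "invertible_mat A"
    and comm: "M * Lg = Lg * M"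
    and T: "T \<in> carrier_mat n (n - 1)"
    and T_inj: "\<forall>v \<in> carrier_vec (n - 1). T *\<^sub>v v = 0\<^sub>v n \<longrightarrow> v = 0\<^sub>v (n - 1)"
    and R: "R \<in> carrier_mat (n - 1) (n - 1)" "invertible_mat R"
    and M_triv: "M * T = T"
    and long: "Lg * T = T * R"
    and f: "f \<in> carrier_mat 1 n" "f \<noteq> 0\<^sub>m 1 n"
    and fW: "f * T = 0\<^sub>m 1 (n - 1)"
    and g: "g \<in> carrier_mat n 1"
    and fg: "f * g = 1\<^sub>m 1"
  shows "scal (f * Lg * g) = mat_trace Lg - mat_trace R
       \<and> 1 - scal (f * (1\<^sub>m n - M) * g) = 1 - mat_trace (1\<^sub>m n - M)
       \<and> scal (f * A * (1\<^sub>m n - M) * g) = mat_trace (A - A * M)"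
  proof -
  obtain m where nm: "n = Suc m" using n by (cases n) auto
  hence m1: "n - 1 = m" by simp
  note T' = T[unfolded m1] and R' = R(1)[unfolded m1]
  have T_inj': "\<forall>v \<in> carrier_vec m. T *\<^sub>v v = 0\<^sub>v n \<longrightarrow> v = 0\<^sub>v m" using T_inj m1 by simp
  obtain S where S: "S \<in> carrier_mat m n" and I: "T * S + g * f = 1\<^sub>m n" and ST: "S * T = 1\<^sub>m m"
    using decomp[OF nm T' T_inj' f(1) fW[unfolded m1] g fg] by blast
  have TS: "T * S \<in> carrier_mat n n" using T' S by simp
  have gf: "g * f \<in> carrier_mat n n" using g f(1) by simp
  have Lgg: "Lg * g \<in> carrier_mat n 1" using Lg(1) g by simp
  have "mat_trace Lg = mat_trace (Lg * (T * S + g * f))" using Lg(1) I by simp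
  also have "\<dots> = mat_trace (Lg * (T * S)) + mat_trace (Lg * (g * f))"
    using mult_add_distrib_mat[OF Lg(1) TS gf] mat_trace_add[of "Lg * (T*S)" n "Lg * (g*f)"] Lg(1) TS gf
    by simp
  also have "Lg * (T * S) = (T * R) * S"
    using assoc_mult_mat[OF Lg(1) T' S] long by simp
  also have "mat_trace ((T * R) * S) = mat_trace (S * (T * R))"
    using T' R' S by (intro mat_trace_comm) auto
  also have "S * (T * R) = (S * T) * R" using assoc_mult_mat[OF S T' R'] by simp
  also have "(S * T) * R = R" using ST R' by simp
  also have "Lg * (g * f) = (Lg * g) * f" using assoc_mult_mat[OF Lg(1) g f(1)] by simp
  also have "mat_trace ((Lg * g) * f) = mat_trace (f * (Lg * g))"
    using Lgg f(1) by (intro mat_trace_comm) auto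
  also have "f * (Lg * g) = f * Lg * g" using assoc_mult_mat[OF f(1) Lg(1) g] by simp
  also have "mat_trace (f * Lg * g) = scal (f * Lg * g)" using f(1) Lg(1) g by (intro mat_trace_one) auto
  finally have c1: "scal (f * Lg * g) = mat_trace Lg - mat_trace R" by simp
  define D where "D = 1\<^sub>m n - M"
  have Dc: "D \<in> carrier_mat n n" unfolding D_def using M(1) by (auto intro: minus_carrier_mat)
  have Dg: "D * g \<in> carrier_mat n 1" using Dc g by simp
  have DT: "D * T = 0\<^sub>m n m"
    unfolding D_def using minus_mult_distrib_mat[OF one_carrier_mat M(1) T'] M_triv T'
    by simp
  have "D = D * (T * S + g * f)" using Dc I by simp
  also have "\<dots> = D * (T * S) + D * (g * f)" using mult_add_distrib_mat[OF Dc TS gf] .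
  also have "D * (T * S) = 0\<^sub>m n n"
    using assoc_mult_mat[OF Dc T' S, symmetric] DT S by simp
  also have "D * (g * f) = (D * g) * f" using assoc_mult_mat[OF Dc g f(1)] by simp
  finally have Dd: "D = (D * g) * f" using Dg f(1) by simp
  have trD: "mat_trace D = scal (f * D * g)"
  proof -
    have "mat_trace D = mat_trace ((D * g) * f)" using Dd by simp
    also have "\<dots> = mat_trace (f * (D * g))" using Dg f(1) by (intro mat_trace_comm) auto
    also have "f * (D * g) = f * D * g" using assoc_mult_mat[OF f(1) Dc g] by simp
    also have "mat_trace (f * D * g) = scal (f * D * g)" using f(1) Dc g by (intro mat_trace_one) auto
    finally show ?thesis .
  qed
  have AD: "A - A * M = A * D"
    unfolding D_def using mult_minus_distrib_mat[OF A(1) one_carrier_mat M(1)] A(1) by simp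
  have "mat_trace (A * D) = mat_trace (A * ((D * g) * f))" using Dd by simp
  also have "A * ((D * g) * f) = (A * (D * g)) * f" using assoc_mult_mat[OF A(1) Dg f(1)] by simp
  also have "mat_trace ((A * (D * g)) * f) = mat_trace (f * (A * (D * g)))"
    using A(1) Dg f(1) by (intro mat_trace_comm) auto
  also have "f * (A * (D * g)) = f * A * D * g"
    using assoc_mult_mat[OF f(1) A(1) Dc] assoc_mult_mat[OF f(1) A(1) Dg]
      assoc_mult_mat[OF A(1) Dc g] assoc_mult_mat[OF _ Dc g, of "f * A" 1] f(1) A(1) by simp
  also have "mat_trace (f * A * D * g) = scal (f * A * D * g)"
    using f(1) A(1) Dc g by (intro mat_trace_one) auto
  finally have c3: "scal (f * A * D * g) = mat_trace (A - A * M)" using AD by simp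
  show ?thesis using c1 c3 trD unfolding D_def by simp
qed

end
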